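(* Let $\beta>0$, $\beta_a>0$, $\alpha>0$ and $x_a\in[0,1]$, let $\Gamma=[0,x_a]\times[0,1-x_a]$, and consider the planar system \[ \frac{di_a}{dt}=F_a(i_a,i_r)\triangleq \beta(x_a-i_a)(i_a+i_r)-\beta_a(x_a-i_a)i_a-\alpha i_a, \qquad \frac{di_r}{dt}=F_r(i_a,i_r)\triangleq \beta(1-x_a-i_r)(i_a+i_r)-\beta_a(x_a-i_a)i_r-\alpha i_r . \] Let $\lambda_+\triangleq\beta-\beta_a x_a-\alpha$. If $\lambda_+\le 0$, then $(0,0)$ is the only isolated equilibrium of the system in $\Gamma$. Moreover, a unique interior equilibrium (a point of $(0,x_a)\times(0,1-x_a)$ at which $F_a=F_r=0$) exists if and only if $\lambda_+>0$.
   Context: An equilibrium is a point $\boldsymbol{i}\in\Gamma$ with $F_a(\boldsymbol{i})=F_r(\boldsymbol{i})=0$; the point $(0,0)$ is called the infection-free equilibrium. *)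

theory Defs
  imports "HOL-Analysis.Analysis"
begin

definition Fa :: "real \<Rightarrow> real \<Rightarrow> real \<Rightarrow> real \<Rightarrow> real \<Rightarrow> real \<Rightarrow> real" where
  "Fa \<beta> \<beta>a \<alpha> xa ia ir = \<beta> * (xa - ia) * (ia + ir) - \<beta>a * (xa - ia) * ia - \<alpha> * ia"

definition Fr :: "real \<Rightarrow> real \<Rightarrow> real \<Rightarrow> real \<Rightarrow> real \<Rightarrow> real \<Rightarrow> real" where
  "Fr \<beta> \<beta>a \<alpha> xa ia ir = \<beta> * (1 - xa - ir) * (ia + ir) - \<beta>a * (xa - ia) * ir - \<alpha> * ir"

definition Gamma :: "real \<Rightarrow> (real \<times> real) set" where
  "Gamma xa = {0..xa} \<times> {0..1 - xa}"

definition equilibrium :: "real \<Rightarrow> real \<Rightarrow> real \<Rightarrow> real \<Rightarrow> real \<times> real \<Rightarrow> bool" where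
  "equilibrium \<beta> \<beta>a \<alpha> xa p \<longleftrightarrow> p \<in> Gamma xa \<and>
      Fa \<beta> \<beta>a \<alpha> xa (fst p) (snd p) = 0 \<and> Fr \<beta> \<beta>a \<alpha> xa (fst p) (snd p) = 0"

definition isolated_equilibrium :: "real \<Rightarrow> real \<Rightarrow> real \<Rightarrow> real \<Rightarrow> real \<times> real \<Rightarrow> bool" where
  "isolated_equilibrium \<beta> \<beta>a \<alpha> xa p \<longleftrightarrow> equilibrium \<beta> \<beta>a \<alpha> xa p \<and>
      \<not> (p islimpt {q. equilibrium \<beta> \<beta>a \<alpha> xa q})"

definition interior_equilibrium :: "real \<Rightarrow> real \<Rightarrow> real \<Rightarrow> real \<Rightarrow> real \<times> real \<Rightarrow> bool" where
  "interior_equilibrium \<beta> \<beta>a \<alpha> xa p \<longleftrightarrow> p \<in> {0<..<xa} \<times> {0<..<1 - xa} \<and>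
      Fa \<beta> \<beta>a \<alpha> xa (fst p) (snd p) = 0 \<and> Fr \<beta> \<beta>a \<alpha> xa (fst p) (snd p) = 0"

end

theory Submission
  imports Defs
begin

lemma sum_eq: "Fa b ba a xa ia ir + Fr b ba a xa ia ir
   = (ia+ir) * (b*(1-(ia+ir)) - ba*(xa-ia) - a)"
  by (simp add: Fa_def Fr_def algebra_simps)

lemma Fa_alt: "Fa b ba a xa ia ir
   = (xa-ia)*(b - ba*xa) - a*xa - (xa-ia)*(b - a - ba*(xa-ia) - b*(ia+ir))"
  by (simp add: Fa_def algebra_simps)

lemma C_of:
  assumes "Fa b ba a xa ia ir = 0" "Fr b ba a xa ia ir = 0" "ia + ir \<noteq> 0"
  shows "b*(1-(ia+ir)) - ba*(xa-ia) - a = 0"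
  using sum_eq[of b ba a xa ia ir] assms by simp

lemma no_eq:
  assumes b: "b > 0" "ba > 0" "a > 0" and lam: "b - ba*xa - a \<le> 0"
    and ia: "0 \<le> ia" "ia \<le> xa" and ir: "0 \<le> ir"
    and e: "Fa b ba a xa ia ir = 0" "Fr b ba a xa ia ir = 0"
  shows "ia = 0 \<and> ir = 0"
proof (rule ccontr)
  assume "\<not> (ia = 0 \<and> ir = 0)"
  then have s: "ia + ir > 0" using ia ir by auto
  have C: "b*(1-(ia+ir)) - ba*(xa-ia) - a = 0" using C_of[OF e] s by simp
  have Fa0: "(xa-ia)*(b*(ia+ir) - ba*ia) = a*ia" using e(1) by (simp add: Fa_def algebra_simps)
  show False
  proof (cases "ia = xa")
    case True
    then have "a*ia = 0" using Fa0 by simp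
    then have "ia = 0" using b by simp
    have "ir > 0" using \<open>ia = 0\<close> s by simp
    have "b*(1-ir) = a" using \<open>ia = 0\<close> True C by simp
    have "b * ir > 0" using \<open>ir > 0\<close> b by simp
    moreover have "b * ir = b - a" using \<open>b*(1-ir) = a\<close> by (simp add: right_diff_distrib)
    ultimately show False using lam True \<open>ia = 0\<close> by simp
  next
    case False
    then have u: "xa - ia > 0" using ia by simp
    show False
    proof (cases "ia = 0")
      case True
      then show False using Fa0 u s b by simp
    next
      case False
      then have "a*ia > 0" using ia b by simp
      then have "(xa-ia)*(b*(ia+ir) - ba*ia) > 0" using Fa0 by simp
      then have "b*(ia+ir) - ba*ia > 0" using u by (simp add: zero_less_mult_iff)
      moreover have "b*(ia+ir) \<le> ba*ia" using C lam by (simp add: algebra_simps)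
      ultimately show False by simp
    qed
  qed
qed

lemma eq_set:
  assumes b: "b > 0" "ba > 0" "a > 0" and lam: "b - ba*xa - a \<le> 0" and xa: "0 \<le> xa" "xa \<le> 1"
  shows "{q. equilibrium b ba a xa q} = {(0,0)}"
proof -
  have "q = (0,0)" if q: "equilibrium b ba a xa q" for q
  proof -
    obtain x y where qq: "q = (x, y)" by (cases q)
    have h: "x \<in> {0..xa}" "y \<in> {0..1-xa}" "Fa b ba a xa x y = 0" "Fr b ba a xa x y = 0"
      using q qq unfolding equilibrium_def Gamma_def by auto
    have "x = 0 \<and> y = 0" using no_eq[OF b lam, of x y] h by simp
    then show ?thesis using qq by simp
  qed
  moreover have "equilibrium b ba a xa (0,0)"
    using xa by (auto simp: equilibrium_def Gamma_def Fa_def Fr_def)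
  ultimately show ?thesis by blast
qed

lemma interior_char:
  assumes b: "b > 0" "ba > 0" "a > 0" and p: "interior_equilibrium b ba a xa (ia, ir)"
  shows "(xa-ia)*(b - ba*xa) = a*xa \<and> b*(ia+ir) = b - a - ba*(xa-ia)"
proof -
  have e: "Fa b ba a xa ia ir = 0" "Fr b ba a xa ia ir = 0" and s: "ia + ir > 0"
    using p by (auto simp: interior_equilibrium_def)
  have C: "b*(1-(ia+ir)) - ba*(xa-ia) - a = 0" using C_of[OF e] s by simp
  then have C2: "b*(ia+ir) = b - a - ba*(xa-ia)" by (simp add: algebra_simps)
  then have z: "b - a - ba*(xa-ia) - b*(ia+ir) = 0" by linarith
  have F: "Fa b ba a xa ia ir = (xa-ia)*(b - ba*xa) - a*xa - (xa-ia)*0"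
    using Fa_alt[of b ba a xa ia ir] unfolding z .
  have "(xa-ia)*(b - ba*xa) = a*xa" using F e(1) by simp
  then show ?thesis using C2 by blast
qed

theorem lemma3:
  fixes \<beta> \<beta>a \<alpha> xa :: real
  assumes "\<beta> > 0" and "\<beta>a > 0" and "\<alpha> > 0" and "0 \<le> xa" and "xa \<le> 1"
  shows "(\<beta> - \<beta>a * xa - \<alpha> \<le> 0 \<longrightarrow>
            isolated_equilibrium \<beta> \<beta>a \<alpha> xa (0, 0) \<and>
            (\<forall>p. isolated_equilibrium \<beta> \<beta>a \<alpha> xa p \<longrightarrow> p = (0, 0)))
       \<and> (0 < xa \<and> xa < 1 \<longrightarrow>
            ((\<exists>!p. interior_equilibrium \<beta> \<beta>a \<alpha> xa p) \<longleftrightarrow> \<beta> - \<beta>a * xa - \<alpha> > 0))"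
proof (intro conjI impI)
  assume lam: "\<beta> - \<beta>a * xa - \<alpha> \<le> 0"
  have E: "{q. equilibrium \<beta> \<beta>a \<alpha> xa q} = {(0,0)}"
    using eq_set[OF assms(1-3) lam assms(4) assms(5)] .
  show "isolated_equilibrium \<beta> \<beta>a \<alpha> xa (0, 0)"
    unfolding isolated_equilibrium_def E using E
    by (auto simp: islimpt_insert)
  show "\<forall>p. isolated_equilibrium \<beta> \<beta>a \<alpha> xa p \<longrightarrow> p = (0, 0)"
    using E by (auto simp: isolated_equilibrium_def)
next
  assume xa: "0 < xa \<and> xa < 1"
  show "(\<exists>!p. interior_equilibrium \<beta> \<beta>a \<alpha> xa p) \<longleftrightarrow> \<beta> - \<beta>a * xa - \<alpha> > 0"
  proof
    assume "\<exists>!p. interior_equilibrium \<beta> \<beta>a \<alpha> xa p"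
    then obtain ia ir where p: "interior_equilibrium \<beta> \<beta>a \<alpha> xa (ia, ir)" by auto
    show "\<beta> - \<beta>a * xa - \<alpha> > 0"
    proof (rule ccontr)
      assume "\<not> ?thesis"
      then have lam: "\<beta> - \<beta>a * xa - \<alpha> \<le> 0" by simp
      have "ia = 0 \<and> ir = 0"
        using no_eq[OF assms(1-3) lam, of ia ir] p by (auto simp: interior_equilibrium_def)
      then show False using p by (auto simp: interior_equilibrium_def)
    qed
  next
    assume lam: "\<beta> - \<beta>a * xa - \<alpha> > 0"
    define L where "L = \<beta> - \<beta>a * xa"
    have L: "L > \<alpha>" using lam L_def by simp
    define u where "u = \<alpha> * xa / L"
    define ia where "ia = xa - u"
    define s where "s = (\<beta> - \<alpha> - \<beta>a * u) / \<beta>"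
    define ir where "ir = s - ia"
    have uL: "u * L = \<alpha> * xa" using L assms(3) by (simp add: u_def)
    have u0: "u > 0" using L xa assms by (simp add: u_def)
    have u1: "u < xa" using L xa assms by (simp add: u_def field_simps)
    have bs: "\<beta> * s = \<beta> - \<alpha> - \<beta>a * u" using assms(1) by (simp add: s_def)
    have k1: "(\<beta> - \<alpha> - \<beta>a * u) * L = \<beta> * (L - \<alpha>)"
    proof -
      have "(\<beta> - \<alpha> - \<beta>a * u) * L = (\<beta> - \<alpha>) * L - \<beta>a * (u * L)"
        by (simp add: algebra_simps)
      also have "\<dots> = (\<beta> - \<alpha>) * L - \<beta>a * (\<alpha> * xa)" using uL by simp
      also have "\<dots> = \<beta> * (L - \<alpha>)" by (simp add: L_def algebra_simps)
      finally show ?thesis .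
    qed
    have "\<beta> * (L - \<alpha>) > 0" using L assms(1) by simp
    then have "\<beta> - \<alpha> - \<beta>a * u > 0" using k1 L assms(3)
      by (metis zero_less_mult_iff less_trans not_less_iff_gr_or_eq)
    then have s0: "s > 0" using assms(1) by (simp add: s_def)
    have k2: "u * (\<beta> - \<beta>a) * L = \<alpha> * L - \<alpha> * \<beta> * (1 - xa)"
    proof -
      have "u * (\<beta> - \<beta>a) * L = (u * L) * (\<beta> - \<beta>a)" by simp
      also have "\<dots> = \<alpha> * xa * (\<beta> - \<beta>a)" using uL by simp
      also have "\<dots> = \<alpha> * L - \<alpha> * \<beta> * (1 - xa)" by (simp add: L_def algebra_simps)
      finally show ?thesis .
    qed
    have "\<alpha> * \<beta> * (1 - xa) > 0" using xa assms by simp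
    then have "u * (\<beta> - \<beta>a) * L < \<alpha> * L" using k2 by simp
    then have "u * (\<beta> - \<beta>a) < \<alpha>" using L assms(3) by simp
    then have "\<beta> * s < \<beta> * (1 - u)" using bs by (simp add: algebra_simps)
    then have "s < 1 - u" using assms(1) by simp
    then have irhi: "ir < 1 - xa" by (simp add: ir_def ia_def)
    have Fa0: "Fa \<beta> \<beta>a \<alpha> xa ia ir = 0"
      using Fa_alt[of \<beta> \<beta>a \<alpha> xa ia ir] uL bs
      by (simp add: ia_def ir_def L_def algebra_simps)
    have C: "\<beta>*(1-(ia+ir)) - \<beta>a*(xa-ia) - \<alpha> = 0"
      using bs by (simp add: ia_def ir_def algebra_simps)
    have Fr0: "Fr \<beta> \<beta>a \<alpha> xa ia ir = 0"
      using sum_eq[of \<beta> \<beta>a \<alpha> xa ia ir] C Fa0 by simp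
    have "ir * (\<beta> * s + \<beta>a * u + \<alpha>) = \<beta> * (1 - xa) * s"
      using Fr0 by (simp add: Fr_def ir_def ia_def algebra_simps)
    moreover have "\<beta> * (1 - xa) * s > 0" using s0 xa assms by simp
    moreover have "\<beta> * s + \<beta>a * u + \<alpha> > 0" using s0 u0 assms by (simp add: add_pos_pos)
    ultimately have ir0: "ir > 0" by (metis zero_less_mult_iff not_less_iff_gr_or_eq)
    have I: "interior_equilibrium \<beta> \<beta>a \<alpha> xa (ia, ir)"
      using Fa0 Fr0 ir0 irhi u0 u1 by (simp add: interior_equilibrium_def ia_def)
    show "\<exists>!p. interior_equilibrium \<beta> \<beta>a \<alpha> xa p"
    proof (rule ex1I[where a="(ia, ir)" and P="interior_equilibrium \<beta> \<beta>a \<alpha> xa", OF I])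
      fix p assume P: "interior_equilibrium \<beta> \<beta>a \<alpha> xa p"
      obtain ja jr where pj: "p = (ja, jr)" by (cases p)
      have c: "(xa-ja)*L = \<alpha>*xa \<and> \<beta>*(ja+jr) = \<beta> - \<alpha> - \<beta>a*(xa-ja)"
        using interior_char[OF assms(1-3)] P pj L_def by simp
      have "xa - ja = u" using c uL L by (metis mult_right_cancel not_less_iff_gr_or_eq assms(3) less_trans)
      then have "ja = ia" by (simp add: ia_def)
      moreover have "ja + jr = s" using c bs \<open>xa - ja = u\<close> assms(1) by (metis mult_left_cancel less_irrefl)
      ultimately show "p = (ia, ir)" using pj by (simp add: ir_def)
    qed
  qed
qed

end
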